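(* Let $\Omega$ be a finite set, let $\mathcal K$ be a finite nonempty set of gambles on $\Omega$, and let $\underline{P}_{\mathcal K}$ be a coherent lower prevision on $\mathcal K$. Let $\mathcal M=\{P: P(f)\ge\underline{P}_{\mathcal K}(f)\ \forall f\in\mathcal K\}$ be its credal set and $\underline{E}(h)=\min_{P\in\mathcal M}P(h)$ its natural extension. For $f\in\mathcal K$ let $\mathcal M_f=\{P\in\mathcal M: P(f)=\underline{E}(f)\}$ and let $\mathcal E_f$ be the set of extreme points of $\mathcal M_f$. Let $\underline{P}$ and $\underline{P}'$ be two coherent lower previsions on the set of all gambles, both agreeing with $\underline{P}_{\mathcal K}$ on $\mathcal K$. Then for every gamble $h$, $$|\underline{P}(h)-\underline{P}'(h)|\le\min_{f\in\mathcal K}\max_{E\in\mathcal E_f}E(h)-\underline{E}(h).$$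
   Context: Gambles are real-valued functions on the finite set $\Omega$. A linear prevision is the expectation functional $P(f)=\sum_{x}p(x)f(x)$ of a probability mass vector $p$. A lower prevision $\underline{P}$ on a set of gambles $\mathcal H$ is coherent if there is a nonempty closed convex set $\mathcal C$ of linear previsions with $\underline{P}(f)=\min_{P\in\mathcal C}P(f)$ for all $f\in\mathcal H$. *)

theory Defs
  imports "HOL-Analysis.Analysis"
begin

text \<open>Gambles on the finite set \<Omega> (a finite type 'a) are functions 'a \<Rightarrow> real.
  Linear previsions are represented by their probability mass vectors p :: real^'a.\<close>

definition pmass :: "(real^'a::finite) set" where
  "pmass = {p. (\<forall>x. 0 \<le> p $ x) \<and> (\<Sum>x\<in>UNIV. p $ x) = 1}"

definition prev :: "real^'a::finite \<Rightarrow> ('a \<Rightarrow> real) \<Rightarrow> real" where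
  "prev p f = (\<Sum>x\<in>UNIV. p $ x * f x)"

text \<open>Coherence: lower envelope (attained minimum) on H of a nonempty closed convex set of
  linear previsions.\<close>
definition coherent_on :: "('a::finite \<Rightarrow> real) set \<Rightarrow> (('a \<Rightarrow> real) \<Rightarrow> real) \<Rightarrow> bool" where
  "coherent_on H LP \<longleftrightarrow> (\<exists>C. C \<subseteq> pmass \<and> C \<noteq> {} \<and> closed C \<and> convex C \<and>
      (\<forall>f\<in>H. (\<forall>p\<in>C. LP f \<le> prev p f) \<and> (\<exists>p\<in>C. prev p f = LP f)))"

definition credal :: "('a::finite \<Rightarrow> real) set \<Rightarrow> (('a \<Rightarrow> real) \<Rightarrow> real) \<Rightarrow> (real^'a) set" where
  "credal K PK = {p\<in>pmass. \<forall>f\<in>K. prev p f \<ge> PK f}"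

definition natext :: "('a::finite \<Rightarrow> real) set \<Rightarrow> (('a \<Rightarrow> real) \<Rightarrow> real) \<Rightarrow> ('a \<Rightarrow> real) \<Rightarrow> real" where
  "natext K PK h = Inf ((\<lambda>p. prev p h) ` credal K PK)"

definition face_at :: "('a::finite \<Rightarrow> real) set \<Rightarrow> (('a \<Rightarrow> real) \<Rightarrow> real) \<Rightarrow> ('a \<Rightarrow> real) \<Rightarrow> (real^'a) set" where
  "face_at K PK f = {p\<in>credal K PK. prev p f = natext K PK f}"

definition extreme_pts :: "('a::finite \<Rightarrow> real) set \<Rightarrow> (('a \<Rightarrow> real) \<Rightarrow> real) \<Rightarrow> ('a \<Rightarrow> real) \<Rightarrow> (real^'a) set" where
  "extreme_pts K PK f = {p. p extreme_point_of face_at K PK f}"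

end

theory Submission
  imports Defs
begin

lemma prev_cont: "continuous_on UNIV (\<lambda>p. prev p f)"
  unfolding prev_def by (intro continuous_intros)

lemma prev_lin: "prev (u *\<^sub>R x + v *\<^sub>R y) f = u * prev x f + v * prev y f"
  unfolding prev_def by (simp add: algebra_simps sum.distrib sum_distrib_left)

lemma closed_pmass: "closed (pmass :: (real^'a::finite) set)"
proof -
  have "pmass = (\<Inter>x. {p::real^'a. 0 \<le> p $ x}) \<inter> {p. (\<Sum>x\<in>UNIV. p $ x) = 1}"
    unfolding pmass_def by auto
  moreover have "closed {p::real^'a. 0 \<le> p $ x}" for x
    by (intro closed_Collect_le continuous_intros)
  moreover have "closed {p::real^'a. (\<Sum>x\<in>UNIV. p $ x) = 1}"
    by (intro closed_Collect_eq continuous_intros)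
  ultimately show ?thesis by (metis closed_INT closed_Int)
qed

lemma pmass_le1: "p \<in> pmass \<Longrightarrow> p $ x \<le> 1"
proof -
  assume p: "p \<in> pmass"
  have "p $ x \<le> (\<Sum>x\<in>UNIV. p $ x)" by (rule member_le_sum) (use p in \<open>auto simp: pmass_def\<close>)
  then show ?thesis using p by (simp add: pmass_def)
qed

lemma bounded_pmass: "bounded (pmass :: (real^'a::finite) set)"
proof -
  have "norm p \<le> 1" if "p \<in> pmass" for p :: "real^'a"
  proof -
    have "norm p \<le> (\<Sum>i\<in>UNIV. \<bar>p$i\<bar>)" by (rule norm_le_l1_cart)
    also have "\<dots> = (\<Sum>i\<in>UNIV. p$i)" using that unfolding pmass_def by simp
    finally show ?thesis using that unfolding pmass_def by simp
  qed
  then show ?thesis unfolding bounded_iff by blast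
qed

lemma prev_bound: "p \<in> pmass \<Longrightarrow> \<bar>prev p h\<bar> \<le> (\<Sum>x\<in>UNIV. \<bar>h x\<bar>)"
proof -
  assume p: "p \<in> pmass"
  have "\<bar>prev p h\<bar> \<le> (\<Sum>x\<in>UNIV. \<bar>p $ x * h x\<bar>)" unfolding prev_def by (rule sum_abs)
  also have "\<dots> \<le> (\<Sum>x\<in>UNIV. \<bar>h x\<bar>)"
  proof (rule sum_mono)
    fix x
    have "0 \<le> p $ x" "p $ x \<le> 1" using p pmass_le1[OF p] unfolding pmass_def by auto
    then show "\<bar>p $ x * h x\<bar> \<le> \<bar>h x\<bar>"
      by (simp add: abs_mult mult_left_le_one_le)
  qed
  finally show ?thesis .
qed

lemma convex_pmass: "convex (pmass :: (real^'a::finite) set)"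
  unfolding convex_def pmass_def
  by (auto simp: sum.distrib sum_distrib_left[symmetric])

lemma convex_credal: "convex (credal K PK)"
proof -
  have "convex {p. \<forall>f\<in>K. prev p f \<ge> PK f}"
    unfolding convex_def
  proof (clarsimp)
    fix x y :: "real^'a" and u v :: real and f
    assume a: "\<forall>f\<in>K. PK f \<le> prev x f" "\<forall>f\<in>K. PK f \<le> prev y f" "0 \<le> u" "0 \<le> v" "u + v = 1" "f \<in> K"
    have "u * PK f \<le> u * prev x f" "v * PK f \<le> v * prev y f"
      using a by (auto intro: mult_left_mono)
    then have "(u+v) * PK f \<le> u * prev x f + v * prev y f" by (simp add: distrib_right)
    then show "PK f \<le> prev (u *\<^sub>R x + v *\<^sub>R y) f" using a by (simp add: prev_lin)
  qed
  moreover have "credal K PK = pmass \<inter> {p. \<forall>f\<in>K. prev p f \<ge> PK f}"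
    unfolding credal_def by auto
  ultimately show ?thesis using convex_pmass convex_Int by metis
qed

lemma convex_face: "convex (face_at K PK f)"
proof -
  have "convex {p. prev p f = natext K PK f}"
    unfolding convex_def by (simp add: prev_lin flip: distrib_right)
  moreover have "face_at K PK f = credal K PK \<inter> {p. prev p f = natext K PK f}"
    unfolding face_at_def by auto
  ultimately show ?thesis using convex_credal convex_Int by metis
qed

lemma compact_face: "compact (face_at K PK f)"
proof -
  have c1: "closed {p::real^'a. \<forall>f\<in>K. prev p f \<ge> PK f}"
  proof -
    have "{p::real^'a. \<forall>f\<in>K. prev p f \<ge> PK f} = (\<Inter>f\<in>K. {p. PK f \<le> prev p f})" by auto
    moreover have "closed {p::real^'a. PK f \<le> prev p f}" for f
      by (intro closed_Collect_le continuous_intros prev_cont)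
    ultimately show ?thesis by auto
  qed
  have c2: "closed {p::real^'a. prev p f = natext K PK f}"
    by (intro closed_Collect_eq continuous_intros prev_cont)
  have "face_at K PK f = pmass \<inter> {p. \<forall>f\<in>K. prev p f \<ge> PK f} \<inter> {p. prev p f = natext K PK f}"
    unfolding face_at_def credal_def by auto
  moreover have "closed \<dots>" by (intro closed_Int c1 c2 closed_pmass)
  moreover have "bounded \<dots>" using bounded_pmass bounded_subset by blast
  ultimately show ?thesis using compact_eq_bounded_closed by metis
qed

lemma bdd_prev: "S \<subseteq> pmass \<Longrightarrow> bdd_above ((\<lambda>p. prev p h) ` S) \<and> bdd_below ((\<lambda>p. prev p h) ` S)"
proof -
  assume S: "S \<subseteq> pmass"
  let ?B = "(\<Sum>x\<in>UNIV. \<bar>h x\<bar>)"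
  have "\<bar>prev p h\<bar> \<le> ?B" if "p \<in> S" for p using prev_bound[of p h] S that by auto
  then have "prev p h \<le> ?B" "- ?B \<le> prev p h" if "p \<in> S" for p
  proof -
    have a: "\<bar>prev p h\<bar> \<le> ?B" using that \<open>\<And>p. p \<in> S \<Longrightarrow> \<bar>prev p h\<bar> \<le> ?B\<close> by blast
    show "prev p h \<le> ?B" using abs_le_D1[OF a] .
    show "- ?B \<le> prev p h" using abs_le_D2[OF a] by linarith
  qed
  then show ?thesis unfolding bdd_above_def bdd_below_def by blast
qed

lemma face_le_ext:
  assumes "p \<in> face_at K PK f"
  shows "prev p h \<le> Sup ((\<lambda>E. prev E h) ` extreme_pts K PK f)"
proof -
  let ?b = "Sup ((\<lambda>E. prev E h) ` extreme_pts K PK f)"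
  have sub: "extreme_pts K PK f \<subseteq> pmass"
  proof -
    have "extreme_pts K PK f \<subseteq> face_at K PK f"
      unfolding extreme_pts_def extreme_point_of_def by blast
    moreover have "face_at K PK f \<subseteq> pmass" unfolding face_at_def credal_def by blast
    ultimately show ?thesis by blast
  qed
  have "extreme_pts K PK f \<subseteq> {x. prev x h \<le> ?b}"
  proof
    fix x assume x: "x \<in> extreme_pts K PK f"
    have "prev x h \<le> ?b"
    proof (rule cSup_upper)
      show "prev x h \<in> (\<lambda>E. prev E h) ` extreme_pts K PK f" using x by blast
      show "bdd_above ((\<lambda>E. prev E h) ` extreme_pts K PK f)" using bdd_prev[OF sub, of h] by (rule conjunct1)
    qed
    then show "x \<in> {x. prev x h \<le> ?b}" by simp
  qed
  moreover have "convex {x. prev x h \<le> ?b}"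
    unfolding convex_def
  proof (clarsimp simp: prev_lin)
    fix x y :: "real^'a" and u v :: real
    assume a: "prev x h \<le> ?b" "prev y h \<le> ?b" "0 \<le> u" "0 \<le> v" "u + v = 1"
    have "u * prev x h \<le> u * ?b" "v * prev y h \<le> v * ?b" using a by (auto intro: mult_left_mono)
    then have "u * prev x h + v * prev y h \<le> (u + v) * ?b" by (simp add: distrib_right)
    then show "u * prev x h + v * prev y h \<le> ?b" using a by simp
  qed
  ultimately have "convex hull extreme_pts K PK f \<subseteq> {x. prev x h \<le> ?b}"
    by (rule hull_minimal)
  moreover have "face_at K PK f = convex hull extreme_pts K PK f"
    unfolding extreme_pts_def by (rule Krein_Milman_Minkowski[OF compact_face convex_face])
  ultimately show ?thesis using assms by auto
qed


lemma coh_facts: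
  assumes "coherent_on K PK" "coherent_on UNIV LP" "\<forall>f\<in>K. LP f = PK f"
  shows "natext K PK h \<le> LP h" "\<And>f. f \<in> K \<Longrightarrow> LP h \<le> Sup ((\<lambda>E. prev E h) ` extreme_pts K PK f)"
proof -
  obtain C where C: "C \<subseteq> pmass" "C \<noteq> {}"
    "\<forall>f\<in>UNIV. (\<forall>p\<in>C. LP f \<le> prev p f) \<and> (\<exists>p\<in>C. prev p f = LP f)"
    using assms(2) unfolding coherent_on_def by blast
  obtain CK where CK: "CK \<subseteq> pmass" "CK \<noteq> {}"
    "\<forall>f\<in>K. (\<forall>p\<in>CK. PK f \<le> prev p f) \<and> (\<exists>p\<in>CK. prev p f = PK f)"
    using assms(1) unfolding coherent_on_def by blast
  have Csub: "C \<subseteq> credal K PK"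
  proof
    fix p assume p: "p \<in> C"
    have "\<forall>f\<in>K. prev p f \<ge> PK f"
    proof
      fix f assume f: "f \<in> K"
      have "LP f \<le> prev p f" using C(3) p by blast
      then show "prev p f \<ge> PK f" using assms(3) f by simp
    qed
    then show "p \<in> credal K PK" unfolding credal_def using p C(1) by blast
  qed
  have CKsub: "CK \<subseteq> credal K PK" using CK unfolding credal_def by blast
  have credpm: "credal K PK \<subseteq> pmass" unfolding credal_def by blast
  have bdd: "bdd_below ((\<lambda>p. prev p g) ` credal K PK)" for g
    using bdd_prev[OF credpm, of g] by (rule conjunct2)
  have low: "natext K PK g \<le> prev p g" if "p \<in> credal K PK" for p g
    unfolding natext_def
  proof (rule cInf_lower)
    show "prev p g \<in> (\<lambda>p. prev p g) ` credal K PK" using that by blast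
  qed (rule bdd)
  obtain p where p: "p \<in> C" "prev p h = LP h" using C by blast
  show "natext K PK h \<le> LP h"
    using low[of p h] p Csub by auto
  fix f assume f: "f \<in> K"
  have ne: "natext K PK f = PK f"
  proof (rule antisym)
    obtain q where "q \<in> CK" "prev q f = PK f" using CK f by blast
    then show "natext K PK f \<le> PK f" using low[of q f] CKsub by auto
    have "credal K PK \<noteq> {}" using CKsub CK(2) by blast
    then show "PK f \<le> natext K PK f"
      unfolding natext_def
    proof (rule cINF_greatest)
      fix p assume "p \<in> credal K PK"
      then show "PK f \<le> prev p f" using f unfolding credal_def by blast
    qed
  qed
  obtain q where q: "q \<in> C" "prev q f = LP f" using C by blast
  have "q \<in> face_at K PK f" unfolding face_at_def using q Csub ne assms(3) f by auto
  then have "prev q h \<le> Sup ((\<lambda>E. prev E h) ` extreme_pts K PK f)" by (rule face_le_ext)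
  moreover have "LP h \<le> prev q h" using C q by blast
  ultimately show "LP h \<le> Sup ((\<lambda>E. prev E h) ` extreme_pts K PK f)" by linarith
qed

theorem corollary6:
  fixes K :: "('a::finite \<Rightarrow> real) set"
    and PK LP LP' :: "('a \<Rightarrow> real) \<Rightarrow> real"
  assumes "finite K" and "K \<noteq> {}"
    and "coherent_on K PK"
    and "coherent_on UNIV LP" and "coherent_on UNIV LP'"
    and "\<forall>f\<in>K. LP f = PK f" and "\<forall>f\<in>K. LP' f = PK f"
  shows "\<bar>LP h - LP' h\<bar> \<le>
    Min ((\<lambda>f. Sup ((\<lambda>E. prev E h) ` extreme_pts K PK f)) ` K) - natext K PK h"
proof -
  let ?g = "\<lambda>f. Sup ((\<lambda>E. prev E h) ` extreme_pts K PK f)"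
  have fin: "finite (?g ` K)" and ne: "?g ` K \<noteq> {}" using assms(1,2) by auto
  have a1: "natext K PK h \<le> LP h" by (rule coh_facts(1)[OF assms(3,4,6)])
  have a2: "LP h \<le> Min (?g ` K)"
    unfolding Min_ge_iff[OF fin ne] using coh_facts(2)[OF assms(3,4,6)] by blast
  have b1: "natext K PK h \<le> LP' h" by (rule coh_facts(1)[OF assms(3,5,7)])
  have b2: "LP' h \<le> Min (?g ` K)"
    unfolding Min_ge_iff[OF fin ne] using coh_facts(2)[OF assms(3,5,7)] by blast
  show ?thesis using a1 a2 b1 b2 by linarith
qed

end
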